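(* Let $\triangle ABC\subset\mathbb{S}^2$ be a right spherical triangle with right angle at $C$, and let $a$ and $b$ denote the arclengths of the sides $BC$ and $CA$ respectively. Then \[4\pi\, M_A(\triangle ABC)=\tfrac12\, a\sin b,\qquad\text{where } M_A(R):=\int_R X\cdot A\,d\mu(X).\]
   Context: $\mathbb{S}^2\subset\mathbb{R}^3$ is the unit sphere, $\mu$ is the uniform probability measure on $\mathbb{S}^2$, and the vertices $A,B,C$ are regarded as unit vectors in $\mathbb{R}^3$. Side $a$ is opposite vertex $A$ and side $b$ is opposite vertex $B$. *)

theory Defs
  imports "HOL-Analysis.Analysis"
begin

text \<open>Uniform probability measure on the unit sphere S^2 in R^3, realised as the
  push-forward of the uniform (normalised Lebesgue) probability measure on the open
  unit ball under radial projection x \<mapsto> x / |x| (the point 0 is a null set).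
  This is the normalised cone measure, i.e. normalised surface area on S^2.\<close>
definition sphere_mu :: "(real^3) measure" where
  "sphere_mu = distr (uniform_measure lborel (ball 0 1)) borel sgn"

definition sph_triangle :: "real^3 \<Rightarrow> real^3 \<Rightarrow> real^3 \<Rightarrow> (real^3) set" where
  "sph_triangle A B C =
     {X. norm X = 1 \<and> (\<exists>\<alpha> \<beta> \<gamma>. \<alpha> \<ge> 0 \<and> \<beta> \<ge> 0 \<and> \<gamma> \<ge> 0 \<and>
            X = \<alpha> *\<^sub>R A + \<beta> *\<^sub>R B + \<gamma> *\<^sub>R C)}"

definition arclen :: "real^3 \<Rightarrow> real^3 \<Rightarrow> real" where
  "arclen X Y = arccos (X \<bullet> Y)"

text \<open>The spherical angle at C is right: the tangent vectors at C pointing along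
  the great-circle arcs towards A and towards B are orthogonal.\<close>
definition right_angle_at :: "real^3 \<Rightarrow> real^3 \<Rightarrow> real^3 \<Rightarrow> bool" where
  "right_angle_at C A B \<longleftrightarrow> (A - (A \<bullet> C) *\<^sub>R C) \<bullet> (B - (B \<bullet> C) *\<^sub>R C) = 0"

definition moment :: "real^3 \<Rightarrow> (real^3) set \<Rightarrow> real" where
  "moment A R = (LINT X:R|sphere_mu. X \<bullet> A)"

end

theory Submission
  imports Defs "HOL-Analysis.Analysis"
begin


lemma sin_cos_sq1: "sin x * sin x + cos x * cos x = (1::real)"
  using sin_cos_squared_add[of x] by (simp add: power2_eq_square)

lemma aux_alg:
  fixes cb sb p m s c :: real
  assumes e: "s * s + c * c = 1"
  shows "cb * (2 * s * (c * m)) / 2 + sb * p * (m - (c * m * c - s * (s * m))) / 2 = m * s * (cb * c + sb * s * p)"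
proof -
  have cc: "c * m * c = m - m * (s * s)" using e by (metis add_diff_cancel_left' mult.commute right_diff_distrib' mult.assoc mult_1_right)
  show ?thesis unfolding cc by (simp add: algebra_simps)
qed

lemma aux_gen: "D \<noteq> 0 \<Longrightarrow> cb*(1/D)/2 + sb*y*(m - k/D)/2 = sb*y*m/2 + (cb - sb*y*k)/D/2" for D cb sb y m k :: real
    by (simp add: field_simps)

locale sph =
  fixes ca sa cb sb :: real
  assumes sa_pos: "sa > 0" and sb_pos: "sb > 0"
    and ca_sa: "ca^2 + sa^2 = 1" and cb_sb: "cb^2 + sb^2 = 1"
begin

definition kk :: "real \<Rightarrow> real" where
  "kk \<phi> = cos \<phi> * (ca / sa) + sin \<phi> * (cb / sb)"

definition mm :: "real \<Rightarrow> real" where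
  "mm \<phi> = pi/2 - arctan (kk \<phi>)"

definition HH :: "real \<Rightarrow> real \<Rightarrow> real" where
  "HH \<phi> t = mm \<phi> * sin (t * mm \<phi>) * (cb * cos (t * mm \<phi>) + sb * sin (t * mm \<phi>) * sin \<phi>)"

definition II :: "real \<Rightarrow> real" where
  "II \<phi> = cb * (sin (mm \<phi>))^2 / 2 + sb * sin \<phi> * (mm \<phi> - sin (mm \<phi>) * cos (mm \<phi>)) / 2"

lemma HH_int: "((\<lambda>t. HH \<phi> t) has_integral II \<phi>) {0..1}"
proof -
  define m where "m = mm \<phi>"
  define P where "P t = cb * (sin (t*m))^2 / 2 + sb * sin \<phi> * (t*m - sin (t*m) * cos (t*m)) / 2" for t
  have d: "(P has_vector_derivative HH \<phi> t) (at t within {0..1})" for t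
  proof -
    have "(P has_real_derivative
       (cb * (2 * sin (t*m) * (cos (t*m) * m)) / 2 + sb * sin \<phi> * (m - (cos (t*m) * m * cos (t*m) - sin (t*m) * (sin (t*m) * m))) / 2)) (at t)"
      unfolding P_def
      by (auto intro!: derivative_eq_intros)
    moreover have "(cb * (2 * sin (t*m) * (cos (t*m) * m)) / 2 + sb * sin \<phi> * (m - (cos (t*m) * m * cos (t*m) - sin (t*m) * (sin (t*m) * m))) / 2) = HH \<phi> t"
      unfolding HH_def m_def[symmetric] by (rule aux_alg) (rule sin_cos_sq1)
    ultimately show ?thesis
      by (simp add: has_real_derivative_iff_has_vector_derivative has_vector_derivative_at_within)
  qed
  have "((\<lambda>t. HH \<phi> t) has_integral P 1 - P 0) {0..1}"
    by (rule fundamental_theorem_of_calculus) (use d in auto)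
  moreover have "P 1 - P 0 = II \<phi>" unfolding P_def II_def m_def by simp
  ultimately show ?thesis by simp
qed

definition dmm :: "real \<Rightarrow> real" where
  "dmm \<phi> = - ((- sin \<phi> * (ca/sa) + cos \<phi> * (cb/sb)) / (1 + (kk \<phi>)^2))"

lemma deriv_lin_trig: "((\<lambda>x. cos x * al + sin x * be) has_real_derivative (- sin y * al + cos y * be)) (at y)"
  for al be y :: real
  by (auto intro!: derivative_eq_intros)

lemma mm_deriv: "(mm has_real_derivative dmm \<phi>) (at \<phi>)"
proof -
  have k: "(kk has_real_derivative (- sin \<phi> * (ca/sa) + cos \<phi> * (cb/sb))) (at \<phi>)"
    unfolding kk_def[abs_def] by (rule deriv_lin_trig)
  have "((\<lambda>x. arctan (kk x)) has_real_derivative inverse (1 + (kk \<phi>)^2) * (- sin \<phi> * (ca/sa) + cos \<phi> * (cb/sb))) (at \<phi>)"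
    by (rule DERIV_chain2[OF DERIV_arctan k])
  then have "((\<lambda>x. pi/2 - arctan (kk x)) has_real_derivative 0 - inverse (1 + (kk \<phi>)^2) * (- sin \<phi> * (ca/sa) + cos \<phi> * (cb/sb))) (at \<phi>)"
    by (intro DERIV_diff) auto
  moreover have "0 - inverse (1 + (kk \<phi>)^2) * (- sin \<phi> * (ca/sa) + cos \<phi> * (cb/sb)) = dmm \<phi>"
    unfolding dmm_def by (simp add: divide_inverse_commute)
  ultimately show ?thesis unfolding mm_def[abs_def] by simp
qed

lemma sin_mm: "sin (mm \<phi>) = 1 / sqrt (1 + (kk \<phi>)^2)"
  unfolding mm_def by (simp add: sin_diff cos_arctan)

lemma cos_mm: "cos (mm \<phi>) = kk \<phi> / sqrt (1 + (kk \<phi>)^2)"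
  unfolding mm_def by (simp add: cos_diff sin_arctan)

lemma II_eq: "II \<phi> = sb * sin \<phi> * mm \<phi> / 2 - sb * cos \<phi> * dmm \<phi> / 2"
proof -
  define k where "k = kk \<phi>"
  have q: "sqrt (1 + k^2) ^2 = 1 + k^2" by simp
  have pos: "1 + k^2 > 0" by (simp add: add_pos_nonneg)
  have s2: "(sin (mm \<phi>))^2 = 1/(1+k^2)" using q by (simp add: sin_mm k_def[symmetric] power_divide)
  have sc: "sin (mm \<phi>) * cos (mm \<phi>) = k/(1+k^2)"
    using q by (simp add: sin_mm cos_mm k_def[symmetric] power2_eq_square)
  have sbkb: "sb * (cb/sb) = cb" using sb_pos by simp
  have key: "cb - sb * sin \<phi> * k = sb * cos \<phi> * (- sin \<phi> * (ca/sa) + cos \<phi> * (cb/sb))"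
  proof -
    have "cb - sb * sin \<phi> * k = cb - sb * sin \<phi> * cos \<phi> * (ca/sa) - (sin \<phi>)^2 * cb"
      unfolding k_def kk_def using sbkb sb_pos by (simp add: algebra_simps power2_eq_square)
    also have "\<dots> = (cos \<phi>)^2 * cb - sb * sin \<phi> * cos \<phi> * (ca/sa)"
      by (simp add: cos_squared_eq algebra_simps)
    also have "\<dots> = sb * cos \<phi> * (- sin \<phi> * (ca/sa) + cos \<phi> * (cb/sb))"
      using sbkb sb_pos by (simp add: algebra_simps power2_eq_square)
    finally show ?thesis .
  qed
  have "II \<phi> = cb * (1/(1+k^2)) / 2 + sb * sin \<phi> * (mm \<phi> - k/(1+k^2)) / 2"
    unfolding II_def s2 sc by simp
  also have "\<dots> = sb * sin \<phi> * mm \<phi> / 2 + (cb - sb * sin \<phi> * k) / (1+k^2) / 2"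
    using pos by (intro aux_gen) simp
  also have "\<dots> = sb * sin \<phi> * mm \<phi> / 2 - sb * cos \<phi> * dmm \<phi> / 2"
    unfolding dmm_def k_def[symmetric] key by simp
  finally show ?thesis .
qed

lemma mm0: "mm 0 = arccos ca"
proof -
  have ca1: "\<bar>ca\<bar> < 1"
  proof -
    have "ca^2 < 1" using ca_sa sa_pos by (smt (verit) zero_less_power)
    then show ?thesis by (simp add: abs_square_less_1)
  qed
  define a where "a = arccos ca"
  have a: "0 < a" "a < pi" unfolding a_def using ca1 arccos_lt_bounded[of ca] by (auto simp: abs_less_iff)
  have "sin a = sqrt (1 - ca^2)" unfolding a_def using ca1 by (intro sin_arccos_abs) simp
  also have "\<dots> = sa" using ca_sa sa_pos by (simp add: real_sqrt_unique[symmetric] flip: ca_sa)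
  finally have sa: "sin a = sa" .
  have ca: "cos a = ca" unfolding a_def using ca1 by simp
  have "ca / sa = tan (pi/2 - a)"
    using sa ca by (simp add: tan_def sin_diff cos_diff)
  then have "arctan (ca/sa) = pi/2 - a"
    using a by (simp add: arctan_tan)
  then show ?thesis unfolding mm_def kk_def a_def by simp
qed

lemma II_int: "(II has_integral sb * arccos ca / 2) {0..pi/2}"
proof -
  define P where "P \<phi> = - sb * cos \<phi> * mm \<phi> / 2" for \<phi>
  have d: "(P has_vector_derivative II \<phi>) (at \<phi> within {0..pi/2})" for \<phi>
  proof -
    have "(P has_real_derivative (- sb * (- sin \<phi> * mm \<phi> + cos \<phi> * dmm \<phi>) / 2)) (at \<phi>)"
    proof -
      have "((\<lambda>x. cos x * mm x) has_real_derivative (- sin \<phi> * mm \<phi> + dmm \<phi> * cos \<phi>)) (at \<phi>)"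
        using DERIV_mult[OF DERIV_cos mm_deriv, of \<phi>] by simp
      from DERIV_cmult[OF this, of "- sb / 2"] show ?thesis
        unfolding P_def[abs_def] by (simp add: algebra_simps diff_divide_distrib)
    qed
    moreover have "(- sb * (- sin \<phi> * mm \<phi> + cos \<phi> * dmm \<phi>) / 2) = II \<phi>"
      unfolding II_eq by argo
    ultimately show ?thesis
      by (simp add: has_real_derivative_iff_has_vector_derivative has_vector_derivative_at_within)
  qed
  have "(II has_integral P (pi/2) - P 0) {0..pi/2}"
    by (rule fundamental_theorem_of_calculus) (use d in auto)
  moreover have "P (pi/2) - P 0 = sb * arccos ca / 2" unfolding P_def using mm0 by simp
  ultimately show ?thesis by simp
qed

end

context sph begin

lemma cont_mm: "continuous_on S mm"
  unfolding mm_def[abs_def] kk_def[abs_def] by (intro continuous_intros)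

lemma cont_HH: "continuous_on S (\<lambda>p. HH (fst p) (snd p))"
  unfolding HH_def[abs_def] mm_def[abs_def] kk_def[abs_def] by (intro continuous_intros)

lemma int2: "integral (cbox (0,0) (pi/2,1)) (\<lambda>p. HH (fst p) (snd p)) = sb * arccos ca / 2"
proof -
  have "integral (cbox (0,0) (pi/2,1)) (\<lambda>p. HH (fst p) (snd p))
      = integral (cbox 0 (pi/2)) (\<lambda>x. integral (cbox 0 1) (\<lambda>y. HH (fst (x,y)) (snd (x,y))))"
    by (rule integral_prod_continuous[OF cont_HH])
  also have "\<dots> = integral {0..pi/2} (\<lambda>x. integral {0..1} (HH x))"
    by (simp add: cbox_interval)
  also have "\<dots> = integral {0..pi/2} II"
    by (intro integral_cong) (simp add: integral_unique[OF HH_int])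
  also have "\<dots> = sb * arccos ca / 2" using II_int by (simp add: integral_unique)
  finally show ?thesis .
qed

lemma int3: "integral (cbox (0,(0,0)) (1,(pi/2,1))) (\<lambda>v. (fst v)^2 * HH (fst (snd v)) (snd (snd v)))
   = sb * arccos ca / 6"
proof -
  have c: "continuous_on UNIV (\<lambda>v::real\<times>real\<times>real. (fst v)^2 * HH (fst (snd v)) (snd (snd v)))"
    unfolding HH_def[abs_def] mm_def[abs_def] kk_def[abs_def] by (intro continuous_intros)
  have "integral (cbox (0,(0,0)) (1,(pi/2,1))) (\<lambda>v. (fst v)^2 * HH (fst (snd v)) (snd (snd v)))
     = integral (cbox 0 1) (\<lambda>r. integral (cbox (0,0) (pi/2,1)) (\<lambda>p. (fst (r,p))^2 * HH (fst (snd (r,p))) (snd (snd (r,p)))))"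
    by (rule integral_prod_continuous[OF continuous_on_subset[OF c]]) simp
  also have "\<dots> = integral {0..1} (\<lambda>r. r^2 * (sb * arccos ca / 2))"
    by (simp add: int2[symmetric])
  also have "\<dots> = sb * arccos ca / 6"
  proof -
    define K where "K = sb * arccos ca / 2"
    have "((\<lambda>r. r^2 * K) has_integral ((\<lambda>r. r^3/3 * K) 1 - (\<lambda>r. r^3/3 * K) 0)) {0..1}"
      by (rule fundamental_theorem_of_calculus) (auto intro!: derivative_eq_intros simp: has_real_derivative_iff_has_vector_derivative[symmetric] power2_eq_square)
    then have "((\<lambda>r. r^2 * K) has_integral K/3) {0..1}" by simp
    then have "integral {0..1} (\<lambda>r. r^2 * K) = K/3" by (rule integral_unique)
    then show ?thesis unfolding K_def by simp
  qed
  finally show ?thesis .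
qed

end


definition c3p :: "real \<times> real \<times> real \<Rightarrow> real^3" where
  "c3p p = vector [fst p, fst (snd p), snd (snd p)]"
definition p3c :: "real^3 \<Rightarrow> real \<times> real \<times> real" where
  "p3c v = (v$1, v$2, v$3)"

lemma vec3_eq: "(x::real^3) = y \<longleftrightarrow> x$1 = y$1 \<and> x$2 = y$2 \<and> x$3 = y$3"
  by (auto simp: vec_eq_iff forall_3)

lemma c3p_p3c[simp]: "c3p (p3c v) = v" "p3c (c3p p) = p"
  by (auto simp: c3p_def p3c_def vec3_eq)

lemma c3p_cbox: "c3p ` cbox u w = cbox (c3p u) (c3p w)"
proof -
  have "x \<in> cbox (c3p u) (c3p w) \<longleftrightarrow> p3c x \<in> cbox u w" for x
    by (cases u; cases w) (auto simp: mem_box_cart c3p_def p3c_def forall_3 cbox_Pair_iff)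
  then show ?thesis
    by (auto simp: image_iff intro!: bexI[where x="p3c _"])
qed

lemma p3c_cbox: "p3c ` cbox u w = cbox (p3c u) (p3c w)"
proof -
  have "x \<in> cbox (p3c u) (p3c w) \<longleftrightarrow> c3p x \<in> cbox u w" for x
    by (cases x) (auto simp: mem_box_cart c3p_def p3c_def forall_3 cbox_Pair_iff)
  moreover have "x \<in> p3c ` S \<longleftrightarrow> c3p x \<in> S" for x S
    by (metis c3p_p3c image_iff)
  ultimately show ?thesis by blast
qed

lemma exists_3: "(\<exists>i::3. P i) \<longleftrightarrow> P 1 \<or> P 2 \<or> P 3"
  by (metis exhaust_3)

lemma prod_3: "prod f (UNIV::3 set) = f 1 * f 2 * f 3"
  unfolding UNIV_3 by (simp add: ac_simps)

lemma cbox3_empty: "cbox (x::real^3) y = {} \<longleftrightarrow> \<not> (x$1 \<le> y$1 \<and> x$2 \<le> y$2 \<and> x$3 \<le> y$3)"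
  unfolding interval_eq_empty_cart(2) exists_3 by auto

lemma content_real_if': "Henstock_Kurzweil_Integration.content (cbox a b) = (if a \<le> b then b - a else 0)" for a b :: real
  by simp

lemma content_c3p: "Henstock_Kurzweil_Integration.content (c3p ` cbox u w) = Henstock_Kurzweil_Integration.content (cbox u w)"
proof -
  obtain u1 u2 u3 w1 w2 w3 where u: "u = (u1,u2,u3)" and w: "w = (w1,w2,w3)" by (metis prod.collapse)
  have r: "Henstock_Kurzweil_Integration.content (cbox u w) =
     (if u1 \<le> w1 then w1 - u1 else 0) * ((if u2 \<le> w2 then w2 - u2 else 0) * (if u3 \<le> w3 then w3 - u3 else 0))"
    unfolding u w content_Pair content_real_if' ..
  show ?thesis
    unfolding c3p_cbox r
    unfolding content_cbox_if_cart cbox3_empty prod_3 by (simp add: c3p_def u w)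
qed

lemma c3p_alt: "c3p p = fst p *\<^sub>R axis 1 1 + fst (snd p) *\<^sub>R axis 2 1 + snd (snd p) *\<^sub>R axis 3 1"
  by (auto simp: c3p_def vec3_eq axis_def)

lemma cont_c3p: "continuous (at x) c3p"
  unfolding c3p_alt[abs_def] by (intro continuous_intros)

lemma integral_cart3:
  fixes f :: "real^3 \<Rightarrow> real"
  assumes "f integrable_on cbox a b"
  shows "integral (cbox a b) f = integral (cbox (p3c a) (p3c b)) (\<lambda>p. f (c3p p))"
proof -
  have "(f has_integral integral (cbox a b) f) (cbox a b)" using assms by auto
  then have "((\<lambda>p. f (c3p p)) has_integral (1/1) *\<^sub>R integral (cbox a b) f) (p3c ` cbox a b)"
  proof (rule has_integral_twiddle[where g=c3p and h=p3c and r=1, rotated -1])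
    show "\<exists>w z. c3p ` cbox u v = cbox w z" for u v using c3p_cbox by blast
    show "\<exists>w z. p3c ` cbox u v = cbox w z" for u v using p3c_cbox by blast
  qed (auto simp: content_c3p cont_c3p)
  then show ?thesis unfolding p3c_cbox by (simp add: integral_unique)
qed


locale sph3 = sph ca sa cb sb for ca sa cb sb +
  fixes C u2 u3 :: "real^3"
  assumes nC: "norm C = 1" and nu2: "norm u2 = 1" and nu3: "norm u3 = 1"
    and o12: "C \<bullet> u2 = 0" and o13: "C \<bullet> u3 = 0" and o23: "u2 \<bullet> u3 = 0"
begin

lemma ii: "C \<bullet> C = 1" "u2 \<bullet> u2 = 1" "u3 \<bullet> u3 = 1" "u2 \<bullet> C = 0" "u3 \<bullet> C = 0" "u3 \<bullet> u2 = 0"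
          "C \<bullet> u2 = 0" "C \<bullet> u3 = 0" "u2 \<bullet> u3 = 0"
  using nC nu2 nu3 o12 o13 o23 by (auto simp: norm_eq_1 inner_commute)

definition Qf :: "real^3 \<Rightarrow> real^3" where
  "Qf y = y$1 *\<^sub>R C + y$2 *\<^sub>R u2 + y$3 *\<^sub>R u3"

lemma inner3: "(y::real^3) \<bullet> z = y$1 * z$1 + y$2 * z$2 + y$3 * z$3"
  by (simp add: inner_vec_def sum_3)

lemma comb_inner: "(a1 *\<^sub>R C + a2 *\<^sub>R u2 + a3 *\<^sub>R u3) \<bullet> (b1 *\<^sub>R C + b2 *\<^sub>R u2 + b3 *\<^sub>R u3)
   = a1 * b1 + a2 * b2 + a3 * b3"
  by (simp add: inner_add_left inner_add_right ii)

lemma comb_dots: "(a1 *\<^sub>R C + a2 *\<^sub>R u2 + a3 *\<^sub>R u3) \<bullet> C = a1"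
   "(a1 *\<^sub>R C + a2 *\<^sub>R u2 + a3 *\<^sub>R u3) \<bullet> u2 = a2"
   "(a1 *\<^sub>R C + a2 *\<^sub>R u2 + a3 *\<^sub>R u3) \<bullet> u3 = a3"
  by (simp_all add: inner_add_left ii)

lemma comb_norm: "norm (a1 *\<^sub>R C + a2 *\<^sub>R u2 + a3 *\<^sub>R u3) = sqrt (a1^2 + a2^2 + a3^2)"
  unfolding norm_eq_sqrt_inner comb_inner by (simp add: power2_eq_square)

lemma Qf_inner: "Qf y \<bullet> Qf z = y \<bullet> z"
  by (simp only: Qf_def comb_inner) (simp add: inner3)

lemma linear_Qf: "linear Qf"
  by (rule linearI) (simp_all add: Qf_def algebra_simps)

lemma orth_Qf: "orthogonal_transformation Qf"
  unfolding orthogonal_transformation_def using linear_Qf Qf_inner by blast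

lemma det_Qf: "\<bar>det (matrix Qf)\<bar> = 1"
  by (rule orthogonal_transformation_det[OF orth_Qf])

lemma decomp: "x = (x \<bullet> C) *\<^sub>R C + (x \<bullet> u2) *\<^sub>R u2 + (x \<bullet> u3) *\<^sub>R u3"
proof -
  obtain y where y: "x = Qf y" using orthogonal_transformation_surj[OF orth_Qf] by (metis surjD)
  show ?thesis unfolding y unfolding Qf_def comb_dots ..
qed

lemma norm_sq3: "norm x ^ 2 = (x \<bullet> C)^2 + (x \<bullet> u2)^2 + (x \<bullet> u3)^2"
proof -
  have "norm x = sqrt ((x \<bullet> C)^2 + (x \<bullet> u2)^2 + (x \<bullet> u3)^2)"
    by (subst decomp) (rule comb_norm)
  then show ?thesis by simp
qed

definition AA where "AA = cb *\<^sub>R C + 0 *\<^sub>R u2 + sb *\<^sub>R u3"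
definition BB where "BB = ca *\<^sub>R C + sa *\<^sub>R u2 + 0 *\<^sub>R u3"
definition nn where "nn = 1 *\<^sub>R C + (- (ca/sa)) *\<^sub>R u2 + (- (cb/sb)) *\<^sub>R u3"

lemma nn_ne: "nn \<noteq> 0"
proof
  assume "nn = 0"
  then have "nn \<bullet> C = 0" by simp
  then show False unfolding nn_def comb_dots by simp
qed

lemma tri_char: "sph_triangle AA BB C = {X. norm X = 1 \<and> X \<bullet> u2 \<ge> 0 \<and> X \<bullet> u3 \<ge> 0 \<and> X \<bullet> nn \<ge> 0}"
proof (intro set_eqI iffI)
  fix X assume "X \<in> sph_triangle AA BB C"
  then obtain al be ga where n: "norm X = 1" and pos: "al \<ge> 0" "be \<ge> 0" "ga \<ge> 0"
     and X: "X = al *\<^sub>R AA + be *\<^sub>R BB + ga *\<^sub>R C"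
    unfolding sph_triangle_def by blast
  have X': "X = (al * cb + be * ca + ga) *\<^sub>R C + (be * sa) *\<^sub>R u2 + (al * sb) *\<^sub>R u3"
    unfolding X AA_def BB_def by (simp add: algebra_simps)
  have "X \<bullet> nn = ga"
    unfolding X' nn_def comb_inner using sa_pos sb_pos by (simp add: field_simps)
  then show "X \<in> {X. norm X = 1 \<and> X \<bullet> u2 \<ge> 0 \<and> X \<bullet> u3 \<ge> 0 \<and> X \<bullet> nn \<ge> 0}"
  proof -
    have "X \<bullet> u2 = be * sa" "X \<bullet> u3 = al * sb" unfolding X' comb_dots by simp_all
    then show ?thesis using n pos sa_pos sb_pos \<open>X \<bullet> nn = ga\<close> by simp
  qed
next
  fix X assume "X \<in> {X. norm X = 1 \<and> X \<bullet> u2 \<ge> 0 \<and> X \<bullet> u3 \<ge> 0 \<and> X \<bullet> nn \<ge> 0}"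
  then have n: "norm X = 1" and p: "X \<bullet> u2 \<ge> 0" "X \<bullet> u3 \<ge> 0" "X \<bullet> nn \<ge> 0" by auto
  define al where "al = (X \<bullet> u3) / sb"
  define be where "be = (X \<bullet> u2) / sa"
  define ga where "ga = X \<bullet> nn"
  have ga: "ga = X \<bullet> C - (ca/sa) * (X \<bullet> u2) - (cb/sb) * (X \<bullet> u3)"
    unfolding ga_def nn_def by (simp add: inner_add_right inner_diff_right)
  have "X = al *\<^sub>R AA + be *\<^sub>R BB + ga *\<^sub>R C"
  proof -
    have "al *\<^sub>R AA + be *\<^sub>R BB + ga *\<^sub>R C = (al * cb + be * ca + ga) *\<^sub>R C + (be * sa) *\<^sub>R u2 + (al * sb) *\<^sub>R u3"
      unfolding AA_def BB_def by (simp add: algebra_simps)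
    also have "\<dots> = (X \<bullet> C) *\<^sub>R C + (X \<bullet> u2) *\<^sub>R u2 + (X \<bullet> u3) *\<^sub>R u3"
      unfolding al_def be_def ga using sa_pos sb_pos by (simp add: field_simps)
    finally show ?thesis using decomp by simp
  qed
  moreover have "al \<ge> 0" "be \<ge> 0" "ga \<ge> 0" using p sa_pos sb_pos unfolding al_def be_def ga_def by auto
  ultimately show "X \<in> sph_triangle AA BB C" unfolding sph_triangle_def using n by blast
qed

lemma tri_closed: "closed (sph_triangle AA BB C)"
  unfolding tri_char
  by (intro closed_Collect_conj closed_Collect_le closed_Collect_eq continuous_intros)

end

context sph3 begin

definition Sph :: "real \<Rightarrow> real \<Rightarrow> real^3" where
  "Sph \<phi> \<rho> = cos \<rho> *\<^sub>R C + (sin \<rho> * cos \<phi>) *\<^sub>R u2 + (sin \<rho> * sin \<phi>) *\<^sub>R u3"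

definition gg :: "real^3 \<Rightarrow> real^3" where
  "gg v = (v$1 * cos (v$3 * mm (v$2))) *\<^sub>R C + (v$1 * (sin (v$3 * mm (v$2)) * cos (v$2))) *\<^sub>R u2
        + (v$1 * (sin (v$3 * mm (v$2)) * sin (v$2))) *\<^sub>R u3"

lemma gg_Sph: "gg v = v$1 *\<^sub>R Sph (v$2) (v$3 * mm (v$2))"
  unfolding gg_def Sph_def by (simp add: algebra_simps)

definition Bx :: "(real^3) set" where "Bx = box 0 (vector [1, pi/2, 1])"

lemma in_Bx: "v \<in> Bx \<longleftrightarrow> 0 < v$1 \<and> v$1 < 1 \<and> 0 < v$2 \<and> v$2 < pi/2 \<and> 0 < v$3 \<and> v$3 < 1"
  by (simp add: Bx_def mem_box_cart forall_3)

lemma mm_bounds: "0 < mm \<phi>" "mm \<phi> < pi"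
  unfolding mm_def using arctan_lbound[of "kk \<phi>"] arctan_ubound[of "kk \<phi>"] by auto

lemma cos_mm_eq: "cos (mm \<phi>) = kk \<phi> * sin (mm \<phi>)"
  unfolding sin_mm cos_mm by simp

lemma sin_mm_pos: "sin (mm \<phi>) > 0"
  using mm_bounds by (simp add: sin_gt_zero)

lemma norm_Sph: "norm (Sph \<phi> \<rho>) = 1"
proof -
  have "(cos \<rho>)^2 + (sin \<rho> * cos \<phi>)^2 + (sin \<rho> * sin \<phi>)^2 = (cos \<rho>)^2 + (sin \<rho>)^2 * ((cos \<phi>)^2 + (sin \<phi>)^2)"
    by (simp only: power_mult_distrib distrib_left add.assoc)
  also have "\<dots> = 1" by (simp only: sin_cos_squared_add2 mult_1_right)
  finally have e: "(cos \<rho>)^2 + (sin \<rho> * cos \<phi>)^2 + (sin \<rho> * sin \<phi>)^2 = 1" .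
  show ?thesis unfolding Sph_def comb_norm e by simp
qed

lemma Sph_dots: "Sph \<phi> \<rho> \<bullet> C = cos \<rho>" "Sph \<phi> \<rho> \<bullet> u2 = sin \<rho> * cos \<phi>" "Sph \<phi> \<rho> \<bullet> u3 = sin \<rho> * sin \<phi>"
  unfolding Sph_def comb_dots by simp_all

lemma Sph_nn: "Sph \<phi> \<rho> \<bullet> nn = cos \<rho> - kk \<phi> * sin \<rho>"
  unfolding Sph_def nn_def comb_inner kk_def by (simp add: algebra_simps)

lemma Sph_AA: "Sph \<phi> \<rho> \<bullet> AA = cb * cos \<rho> + sb * sin \<rho> * sin \<phi>"
  unfolding Sph_def AA_def comb_inner by (simp add: algebra_simps)

lemma key_sin: "sin (mm \<phi>) * (cos \<rho> - kk \<phi> * sin \<rho>) = sin (mm \<phi> - \<rho>)"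
  unfolding sin_diff cos_mm_eq by (simp add: algebra_simps)

lemma Bx_facts:
  assumes "v \<in> Bx"
  shows "0 < v$3 * mm (v$2)" "v$3 * mm (v$2) < mm (v$2)" "mm (v$2) < pi"
    "sin (v$3 * mm (v$2)) > 0" "sin (v$2) > 0" "cos (v$2) > 0"
proof -
  have v: "0 < v$1" "v$1 < 1" "0 < v$2" "v$2 < pi/2" "0 < v$3" "v$3 < 1" using assms in_Bx by auto
  show fa: "0 < v$3 * mm (v$2)" using v mm_bounds by simp
  show fb: "v$3 * mm (v$2) < mm (v$2)" using v mm_bounds by simp
  show "mm (v$2) < pi" by (rule mm_bounds)
  have "v$3 * mm (v$2) < pi" using fb mm_bounds[of "v$2"] by linarith
  then show "sin (v$3 * mm (v$2)) > 0" using fa by (intro sin_gt_zero)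
  show "sin (v$2) > 0" using v by (intro sin_gt_zero) auto
  show "cos (v$2) > 0" using v by (intro cos_gt_zero) auto
qed

lemma Sph_in_tri:
  assumes "v \<in> Bx"
  shows "Sph (v$2) (v$3 * mm (v$2)) \<in> sph_triangle AA BB C"
proof -
  note f = Bx_facts[OF assms]
  define \<rho> where "\<rho> = v$3 * mm (v$2)"
  have "sin (mm (v$2) - \<rho>) > 0" using f unfolding \<rho>_def by (intro sin_gt_zero) auto
  then have "sin (mm (v$2)) * (cos \<rho> - kk (v$2) * sin \<rho>) > 0" using key_sin by simp
  then have "cos \<rho> - kk (v$2) * sin \<rho> > 0" using sin_mm_pos zero_less_mult_pos by blast
  then show ?thesis
    unfolding tri_char using f norm_Sph unfolding \<rho>_def[symmetric]
    by (simp add: Sph_dots Sph_nn less_imp_le)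
qed

lemma norm_gg: "v \<in> Bx \<Longrightarrow> norm (gg v) = v$1"
  unfolding gg_Sph by (simp add: norm_Sph in_Bx)

lemma sgn_gg: "v \<in> Bx \<Longrightarrow> sgn (gg v) = Sph (v$2) (v$3 * mm (v$2))"
  using norm_gg[of v] unfolding sgn_div_norm by (simp add: gg_Sph in_Bx)

definition FF :: "real^3 \<Rightarrow> real" where
  "FF x = indicator (sph_triangle AA BB C) (sgn x) * (sgn x \<bullet> AA)"

lemma FF_gg: "v \<in> Bx \<Longrightarrow> FF (gg v) = cb * cos (v$3 * mm (v$2)) + sb * sin (v$3 * mm (v$2)) * sin (v$2)"
  unfolding FF_def using Sph_in_tri by (simp add: sgn_gg Sph_AA)

lemma gg_ball: "gg ` Bx \<subseteq> ball 0 1"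
  using norm_gg by (auto simp: in_Bx)

lemma inj_gg: "inj_on gg Bx"
proof (rule inj_onI)
  fix v w assume v: "v \<in> Bx" and w: "w \<in> Bx" and e: "gg v = gg w"
  have r: "v$1 = w$1" using norm_gg[OF v] norm_gg[OF w] e by simp
  have S: "Sph (v$2) (v$3 * mm (v$2)) = Sph (w$2) (w$3 * mm (w$2))"
    using sgn_gg[OF v] sgn_gg[OF w] e by simp
  have fv1: "0 < v$3 * mm (v$2)" "v$3 * mm (v$2) < pi" "sin (v$3 * mm (v$2)) > 0"
    using Bx_facts[OF v] by linarith+
  have fw1: "0 < w$3 * mm (w$2)" "w$3 * mm (w$2) < pi"
    using Bx_facts[OF w] by linarith+
  have "Sph (v$2) (v$3 * mm (v$2)) \<bullet> C = Sph (w$2) (w$3 * mm (w$2)) \<bullet> C" using S by simp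
  then have "cos (v$3 * mm (v$2)) = cos (w$3 * mm (w$2))" by (simp only: Sph_dots)
  then have rho: "v$3 * mm (v$2) = w$3 * mm (w$2)"
    using fv1 fw1 cos_inj_pi less_imp_le by metis
  have "Sph (v$2) (v$3 * mm (v$2)) \<bullet> u2 = Sph (w$2) (w$3 * mm (w$2)) \<bullet> u2" using S by simp
  then have "sin (v$3 * mm (v$2)) * cos (v$2) = sin (w$3 * mm (w$2)) * cos (w$2)" by (simp only: Sph_dots)
  then have "sin (v$3 * mm (v$2)) * cos (v$2) = sin (v$3 * mm (v$2)) * cos (w$2)" by (simp only: rho)
  then have "cos (v$2) = cos (w$2)" using fv1(3) by simp
  moreover have "0 \<le> v$2" "v$2 \<le> pi" "0 \<le> w$2" "w$2 \<le> pi" using v w unfolding in_Bx by linarith+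
  ultimately have phi: "v$2 = w$2" using cos_inj_pi by metis
  have "mm (w$2) > 0" by (rule mm_bounds)
  then have t: "v$3 = w$3" using rho phi by simp
  show "v = w" using r phi t by (simp add: vec3_eq)
qed

definition Nul :: "(real^3) set" where
  "Nul = {0} \<union> {x. u2 \<bullet> x = 0} \<union> {x. u3 \<bullet> x = 0} \<union> {x. nn \<bullet> x = 0}"

lemma negl_Nul: "negligible Nul"
proof -
  have "u2 \<noteq> 0" "u3 \<noteq> 0" using nu2 nu3 by auto
  then show ?thesis unfolding Nul_def
    by (intro negligible_Un negligible_hyperplane) (auto simp: nn_ne)
qed

end

context sph3 begin

lemma cover:
  assumes x: "x \<in> ball 0 1" and T: "sgn x \<in> sph_triangle AA BB C" and N: "x \<notin> Nul"
  shows "x \<in> gg ` Bx"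
proof -
  define r where "r = norm x"
  have x0: "x \<noteq> 0" using N unfolding Nul_def by auto
  have r: "0 < r" "r < 1" using x x0 unfolding r_def by auto
  define y where "y = sgn x"
  have xy: "x = r *\<^sub>R y" unfolding y_def r_def sgn_div_norm using x0 by simp
  have yT: "norm y = 1" "y \<bullet> u2 \<ge> 0" "y \<bullet> u3 \<ge> 0" "y \<bullet> nn \<ge> 0"
    using T unfolding y_def[symmetric] tri_char by auto
  have "u2 \<bullet> x \<noteq> 0" "u3 \<bullet> x \<noteq> 0" "nn \<bullet> x \<noteq> 0" using N unfolding Nul_def by auto
  then have "y \<bullet> u2 \<noteq> 0" "y \<bullet> u3 \<noteq> 0" "y \<bullet> nn \<noteq> 0" unfolding xy using r by (auto simp: inner_commute)
  then have y23: "y \<bullet> u2 > 0" "y \<bullet> u3 > 0" "y \<bullet> nn > 0" using yT by auto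
  define y1 where "y1 = y \<bullet> C"
  define y2 where "y2 = y \<bullet> u2"
  define y3 where "y3 = y \<bullet> u3"
  have sq: "y1^2 + y2^2 + y3^2 = 1" using norm_sq3[of y] yT(1) unfolding y1_def y2_def y3_def by simp
  have p: "y2 > 0" "y3 > 0" using y23 unfolding y2_def y3_def by auto
  have "y1^2 < 1" using sq p by (smt (verit) zero_less_power)
  then have y1b: "-1 < y1" "y1 < 1" by (auto simp: abs_square_less_1 abs_less_iff)
  define \<rho> where "\<rho> = arccos y1"
  have \<rho>b: "0 < \<rho>" "\<rho> < pi" unfolding \<rho>_def using arccos_lt_bounded[OF y1b] by auto
  have c\<rho>: "cos \<rho> = y1" unfolding \<rho>_def using y1b by simp
  define s where "s = sin \<rho>"
  have s: "s = sqrt (y2^2 + y3^2)"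
  proof -
    have "s = sqrt (1 - y1^2)" unfolding s_def \<rho>_def using y1b by (intro sin_arccos_abs) simp
    also have "1 - y1^2 = y2^2 + y3^2" using sq by simp
    finally show ?thesis .
  qed
  have spos: "s > 0" unfolding s using p by (simp add: add_pos_pos)
  have s2: "s^2 = y2^2 + y3^2" unfolding s by simp
  define q where "q = y2 / s"
  have "sqrt (y2^2) < sqrt (y2^2 + y3^2)" using p by (intro real_sqrt_less_mono) simp
  then have "y2 < s" unfolding s using p by simp
  then have qb: "0 < q" "q < 1" unfolding q_def using p spos by auto
  define \<phi> where "\<phi> = arccos q"
  have c\<phi>: "cos \<phi> = q" unfolding \<phi>_def using qb by simp
  have \<phi>b0: "0 < \<phi>" "\<phi> < pi" unfolding \<phi>_def using arccos_lt_bounded[of q] qb by auto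
  have \<phi>b: "\<phi> < pi/2"
  proof (rule ccontr)
    assume "\<not> \<phi> < pi/2"
    then have "cos (pi - \<phi>) \<ge> 0" using \<phi>b0 by (intro cos_ge_zero) auto
    then have "cos \<phi> \<le> 0" by simp
    then show False using c\<phi> qb by simp
  qed
  have s\<phi>: "sin \<phi> = y3 / s"
  proof -
    have "sin \<phi> = sqrt (1 - q^2)" unfolding \<phi>_def using qb by (intro sin_arccos_abs) simp
    also have "1 - q^2 = (s^2 - y2^2) / s^2" unfolding q_def using spos by (simp add: field_simps power_divide)
    also have "\<dots> = (y3 / s)^2" using s2 by (simp add: power_divide)
    also have "sqrt ((y3 / s)^2) = y3 / s" using p spos by simp
    finally show ?thesis .
  qed
  have yS: "y = Sph \<phi> \<rho>"
  proof -
    have "y = y1 *\<^sub>R C + y2 *\<^sub>R u2 + y3 *\<^sub>R u3" unfolding y1_def y2_def y3_def by (rule decomp)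
    also have "\<dots> = Sph \<phi> \<rho>" unfolding Sph_def c\<rho> c\<phi> s\<phi> s_def[symmetric] q_def using spos by simp
    finally show ?thesis .
  qed
  have "sin (mm \<phi> - \<rho>) > 0"
    unfolding key_sin[symmetric] using y23(3) sin_mm_pos unfolding yS Sph_nn by simp
  then have lt: "\<rho> < mm \<phi>"
  proof -
    assume sp: "sin (mm \<phi> - \<rho>) > 0"
    show ?thesis
    proof (rule ccontr)
      assume "\<not> \<rho> < mm \<phi>"
      then have "0 \<le> \<rho> - mm \<phi>" "\<rho> - mm \<phi> \<le> pi" using \<rho>b mm_bounds[of \<phi>] by auto
      then have "sin (\<rho> - mm \<phi>) \<ge> 0" by (rule sin_ge_zero)
      moreover have "sin (\<rho> - mm \<phi>) = - sin (mm \<phi> - \<rho>)" by (metis minus_diff_eq sin_minus)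
      ultimately show False using sp by linarith
    qed
  qed
  define t where "t = \<rho> / mm \<phi>"
  have mp: "mm \<phi> > 0" by (rule mm_bounds)
  have tb: "0 < t" "t < 1" unfolding t_def using lt mp \<rho>b by auto
  have tm: "t * mm \<phi> = \<rho>" unfolding t_def using mp by simp
  define v where "v = (vector [r, \<phi>, t] :: real^3)"
  have vB: "v \<in> Bx" unfolding in_Bx v_def using r \<phi>b0 \<phi>b tb by simp
  have "gg v = x" unfolding gg_Sph v_def using tm xy yS by simp
  then show ?thesis using vB by blast
qed

end


lemma has_derivative_vec_nth'[derivative_intros]:
  "(f has_derivative f') F \<Longrightarrow> ((\<lambda>x. f x $ i) has_derivative (\<lambda>h. f' h $ i)) F"
  by (rule bounded_linear.has_derivative[OF bounded_linear_vec_nth])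

definition JHg :: "real \<Rightarrow> real \<Rightarrow> real \<Rightarrow> real \<Rightarrow> real \<Rightarrow> real \<Rightarrow> real \<Rightarrow> real \<Rightarrow> real^3^3" where
  "JHg r t d m c1 s1 c2 s2 = vector [vector [c1, - r * s1 * t * d, - r * s1 * m],
      vector [s1 * c2, r * (c1 * t * d * c2 - s1 * s2), r * c1 * m * c2],
      vector [s1 * s2, r * (c1 * t * d * s2 + s1 * c2), r * c1 * m * s2]]"

lemma det_JHg:
  fixes r t d m c1 s1 c2 s2 :: real
  assumes e1: "s1 * s1 + c1 * c1 = 1" and e2: "s2 * s2 + c2 * c2 = 1"
  shows "det (JHg r t d m c1 s1 c2 s2) = - (r * r * m * s1)"
  unfolding JHg_def det_3 vector_3 using e1 e2 by algebra

lemma JHg_mult: "JHg r t d m c1 s1 c2 s2 *v h = vector [c1 * h$1 + (- r * s1 * t * d) * h$2 + (- r * s1 * m) * h$3,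
     (s1 * c2) * h$1 + (r * (c1 * t * d * c2 - s1 * s2)) * h$2 + (r * c1 * m * c2) * h$3,
     (s1 * s2) * h$1 + (r * (c1 * t * d * s2 + s1 * c2)) * h$2 + (r * c1 * m * s2) * h$3]"
  unfolding JHg_def by (simp add: matrix_vector_mult_def sum_3 vec3_eq)

context sph3 begin

lemma has_derivative_mm[derivative_intros]:
  "(g has_derivative g') F \<Longrightarrow> F = at x within s \<Longrightarrow> ((\<lambda>x. mm (g x)) has_derivative (\<lambda>h. g' h * dmm (g x))) (at x within s)"
  using DERIV_compose_FDERIV[OF mm_deriv] by blast

definition JH :: "real^3 \<Rightarrow> real^3^3" where
  "JH v = JHg (v$1) (v$3) (dmm (v$2)) (mm (v$2)) (cos (v$3 * mm (v$2))) (sin (v$3 * mm (v$2))) (cos (v$2)) (sin (v$2))"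

lemma d1: "((\<lambda>v::real^3. v$1 * cos (v$3 * mm (v$2))) has_derivative
   (\<lambda>h. cos (v$3 * mm (v$2)) * h$1 + (- v$1 * sin (v$3 * mm (v$2)) * v$3 * dmm (v$2)) * h$2
        + (- v$1 * sin (v$3 * mm (v$2)) * mm (v$2)) * h$3)) (at v)"
  by (rule has_derivative_eq_rhs, (rule derivative_intros | rule has_derivative_mm refl)+) (auto simp: algebra_simps)

lemma d2: "((\<lambda>v::real^3. v$1 * (sin (v$3 * mm (v$2)) * cos (v$2))) has_derivative
   (\<lambda>h. (sin (v$3 * mm (v$2)) * cos (v$2)) * h$1
     + (v$1 * (cos (v$3 * mm (v$2)) * v$3 * dmm (v$2) * cos (v$2) - sin (v$3 * mm (v$2)) * sin (v$2))) * h$2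
     + (v$1 * cos (v$3 * mm (v$2)) * mm (v$2) * cos (v$2)) * h$3)) (at v)"
  by (rule has_derivative_eq_rhs, (rule derivative_intros | rule has_derivative_mm refl)+) (auto simp: algebra_simps)

lemma d3: "((\<lambda>v::real^3. v$1 * (sin (v$3 * mm (v$2)) * sin (v$2))) has_derivative
   (\<lambda>h. (sin (v$3 * mm (v$2)) * sin (v$2)) * h$1
     + (v$1 * (cos (v$3 * mm (v$2)) * v$3 * dmm (v$2) * sin (v$2) + sin (v$3 * mm (v$2)) * cos (v$2))) * h$2
     + (v$1 * cos (v$3 * mm (v$2)) * mm (v$2) * sin (v$2)) * h$3)) (at v)"
  by (rule has_derivative_eq_rhs, (rule derivative_intros | rule has_derivative_mm refl)+) (auto simp: algebra_simps)

lemma gg_deriv: "(gg has_derivative (\<lambda>h. Qf (JH v *v h))) (at v)"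
proof -
  have "((\<lambda>v. (v$1 * cos (v$3 * mm (v$2))) *\<^sub>R C + (v$1 * (sin (v$3 * mm (v$2)) * cos (v$2))) *\<^sub>R u2
        + (v$1 * (sin (v$3 * mm (v$2)) * sin (v$2))) *\<^sub>R u3) has_derivative (\<lambda>h. Qf (JH v *v h))) (at v)"
    by (rule has_derivative_eq_rhs, (rule has_derivative_add has_derivative_scaleR_left d1 d2 d3)+)
       (simp add: Qf_def JH_def JHg_mult algebra_simps)
  then show ?thesis unfolding gg_def[abs_def] .
qed

lemma det_gg: "\<bar>det (matrix (\<lambda>h. Qf (JH v *v h)))\<bar> = \<bar>v$1 * v$1 * mm (v$2) * sin (v$3 * mm (v$2))\<bar>"
proof -
  have "(\<lambda>h. Qf (JH v *v h)) = Qf \<circ> (\<lambda>h. JH v *v h)" by auto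
  then have "matrix (\<lambda>h. Qf (JH v *v h)) = matrix Qf ** JH v"
    using matrix_compose[OF matrix_vector_mul_linear linear_Qf] matrix_of_matrix_vector_mul by metis
  then have "\<bar>det (matrix (\<lambda>h. Qf (JH v *v h)))\<bar> = \<bar>det (JH v)\<bar>"
    by (simp add: det_mul abs_mult det_Qf)
  also have "det (JH v) = - (v$1 * v$1 * mm (v$2) * sin (v$3 * mm (v$2)))"
    unfolding JH_def by (rule det_JHg) (rule sin_cos_sq1)+
  finally show ?thesis by simp
qed

definition P3 :: "real^3 \<Rightarrow> real" where
  "P3 v = (v$1)^2 * HH (v$2) (v$3)"

lemma integrand_Bx:
  assumes "v \<in> Bx"
  shows "\<bar>det (matrix (\<lambda>h. Qf (JH v *v h)))\<bar> * FF (gg v) = P3 v"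
proof -
  note f = Bx_facts[OF assms]
  have "\<bar>v$1 * v$1 * mm (v$2) * sin (v$3 * mm (v$2))\<bar> = v$1 * v$1 * mm (v$2) * sin (v$3 * mm (v$2))"
    using f mm_bounds[of "v$2"] by simp
  then show ?thesis
    unfolding det_gg FF_gg[OF assms] P3_def HH_def by (simp add: power2_eq_square algebra_simps)
qed

end

context sph3 begin

definition b3 :: "real^3" where "b3 = vector [1, pi/2, 1]"
definition e1 :: "real^1" where "e1 = vec 1"

lemma e1_inner: "e1 \<bullet> e1 = 1"
  unfolding e1_def by (simp add: inner_vec_def)

lemma Bx_eq: "Bx = box 0 b3" unfolding Bx_def b3_def ..

lemma cont_P3: "continuous_on S P3"
  unfolding P3_def HH_def[abs_def] mm_def[abs_def] kk_def[abs_def] by (intro continuous_intros)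

lemma P3_int: "(P3 has_integral sb * arccos ca / 6) (cbox 0 b3)"
proof -
  have i: "P3 integrable_on cbox 0 b3" by (rule integrable_continuous[OF cont_P3])
  have "integral (cbox 0 b3) P3 = integral (cbox (p3c 0) (p3c b3)) (\<lambda>p. P3 (c3p p))"
    by (rule integral_cart3[OF i])
  also have "\<dots> = integral (cbox (0,(0,0)) (1,(pi/2,1))) (\<lambda>v. (fst v)^2 * HH (fst (snd v)) (snd (snd v)))"
    by (simp add: p3c_def b3_def P3_def c3p_def)
  also have "\<dots> = sb * arccos ca / 6" by (rule int3)
  finally show ?thesis using i by (metis integrable_integral)
qed

lemma G_absint: "(\<lambda>v. \<bar>det (matrix (\<lambda>h. Qf (JH v *v h)))\<bar> *\<^sub>R (FF (gg v) *\<^sub>R e1)) absolutely_integrable_on Bx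
   \<and> integral Bx (\<lambda>v. \<bar>det (matrix (\<lambda>h. Qf (JH v *v h)))\<bar> *\<^sub>R (FF (gg v) *\<^sub>R e1)) = (sb * arccos ca / 6) *\<^sub>R e1"
proof -
  have eq: "\<bar>det (matrix (\<lambda>h. Qf (JH v *v h)))\<bar> *\<^sub>R (FF (gg v) *\<^sub>R e1) = P3 v *\<^sub>R e1" if "v \<in> Bx" for v
    using integrand_Bx[OF that] by (simp add: scaleR_scaleR)
  have c: "continuous_on (cbox 0 b3) (\<lambda>v. P3 v *\<^sub>R e1)" by (intro continuous_intros cont_P3)
  have "(\<lambda>v. P3 v *\<^sub>R e1) absolutely_integrable_on cbox 0 b3"
    by (rule absolutely_integrable_continuous[OF c])
  then have "(\<lambda>v. P3 v *\<^sub>R e1) absolutely_integrable_on Bx"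
    unfolding Bx_eq by (rule set_integrable_subset) (auto intro: fmeasurableD lmeasurable_box simp: mem_box_cart mem_box_cart less_imp_le)
  then have a: "(\<lambda>v. \<bar>det (matrix (\<lambda>h. Qf (JH v *v h)))\<bar> *\<^sub>R (FF (gg v) *\<^sub>R e1)) absolutely_integrable_on Bx"
    by (rule absolutely_integrable_spike[where S="{}"]) (use eq in auto)
  have "((\<lambda>v. P3 v *\<^sub>R e1) has_integral (sb * arccos ca / 6) *\<^sub>R e1) (cbox 0 b3)"
    by (rule has_integral_scaleR_left[OF P3_int])
  then have "((\<lambda>v. P3 v *\<^sub>R e1) has_integral (sb * arccos ca / 6) *\<^sub>R e1) Bx"
    unfolding Bx_eq has_integral_open_interval .
  then have "((\<lambda>v. \<bar>det (matrix (\<lambda>h. Qf (JH v *v h)))\<bar> *\<^sub>R (FF (gg v) *\<^sub>R e1)) has_integral (sb * arccos ca / 6) *\<^sub>R e1) Bx"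
    by (rule has_integral_eq[rotated]) (use eq in auto)
  then show ?thesis using a by (simp add: integral_unique)
qed

lemma FF_gg_int: "FF absolutely_integrable_on (gg ` Bx) \<and> integral (gg ` Bx) FF = sb * arccos ca / 6"
proof -
  have S: "Bx \<in> sets lebesgue" unfolding Bx_eq by (intro fmeasurableD lmeasurable_box)
  have der: "(gg has_derivative (\<lambda>h. Qf (JH x *v h))) (at x within Bx)" for x
    by (rule has_derivative_at_withinI[OF gg_deriv])
  from has_absolute_integral_change_of_variables[OF S der inj_gg, of "\<lambda>x. FF x *\<^sub>R e1" "(sb * arccos ca / 6) *\<^sub>R e1"] G_absint
  have h: "(\<lambda>x. FF x *\<^sub>R e1) absolutely_integrable_on gg ` Bx"
       "integral (gg ` Bx) (\<lambda>x. FF x *\<^sub>R e1) = (sb * arccos ca / 6) *\<^sub>R e1" by auto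
  have "(\<lambda>x. (FF x *\<^sub>R e1) \<bullet> e1) absolutely_integrable_on gg ` Bx"
    by (rule absolutely_integrable_component[OF h(1)])
  then have a: "FF absolutely_integrable_on gg ` Bx" by (simp add: e1_inner)
  have "integral (gg ` Bx) (\<lambda>x. (FF x *\<^sub>R e1) \<bullet> e1) = integral (gg ` Bx) (\<lambda>x. FF x *\<^sub>R e1) \<bullet> e1"
    by (rule integral_component_eq) (use h(1) absolutely_integrable_on_def in blast)
  then have "integral (gg ` Bx) FF = sb * arccos ca / 6" unfolding h(2) by (simp add: e1_inner)
  then show ?thesis using a by blast
qed

lemma FF_ball_int: "FF absolutely_integrable_on ball 0 1 \<and> integral (ball 0 1) FF = sb * arccos ca / 6"
proof -
  have n1: "negligible {x \<in> ball 0 1 - gg ` Bx. FF x \<noteq> 0}"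
  proof (rule negligible_subset[OF negl_Nul])
    show "{x \<in> ball 0 1 - gg ` Bx. FF x \<noteq> 0} \<subseteq> Nul"
    proof
      fix x assume x: "x \<in> {x \<in> ball 0 1 - gg ` Bx. FF x \<noteq> 0}"
      then have "sgn x \<in> sph_triangle AA BB C" unfolding FF_def by (auto simp: indicator_def split: if_splits)
      then show "x \<in> Nul" using cover x by blast
    qed
  qed
  have "{x \<in> gg ` Bx - ball 0 1. FF x \<noteq> 0} = {}" using gg_ball by auto
  then have n2: "negligible {x \<in> gg ` Bx - ball 0 1. FF x \<noteq> 0}" by (metis negligible_empty)
  show ?thesis
    using FF_gg_int absolutely_integrable_spike_set_eq[OF n1 n2] integral_spike_set[OF n1 n2] by simp
qed

end

context sph3 begin

lemma tri_borel[measurable]: "sph_triangle AA BB C \<in> sets borel"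
  by (rule borel_closed[OF tri_closed])

lemma FF_meas[measurable]: "FF \<in> borel_measurable borel"
  unfolding FF_def[abs_def] by measurable

lemma FF_meas_lborel[measurable]: "FF \<in> borel_measurable lborel"
  using FF_meas by simp

lemma ball_borel[measurable]: "ball (0::real^3) 1 \<in> sets borel"
  by simp

lemma vol_ball: "emeasure lborel (ball (0::real^3) 1) = ennreal (4/3*pi)"
proof -
  have "measure lborel (ball (0::real^3) 1) = 4/3*pi" using sphere_volume[of 1 0] by simp
  moreover have "emeasure lborel (ball (0::real^3) 1) \<noteq> \<infinity>"
    using emeasure_lborel_ball_finite[of "0::real^3" 1] by (metis less_irrefl)
  ultimately show ?thesis using emeasure_eq_ennreal_measure[of lborel "ball (0::real^3) 1"] by simp
qed

lemma unif_eq: "uniform_measure lborel (ball (0::real^3) 1) = density lborel (\<lambda>x. ennreal (indicator (ball 0 1) x / (4/3*pi)))"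
proof -
  have "(indicator (ball 0 1) x :: ennreal) / ennreal (4/3*pi) = ennreal (indicator (ball (0::real^3) 1) x / (4/3*pi))" for x
    unfolding ennreal_indicator[symmetric] by (rule divide_ennreal) auto
  then show ?thesis unfolding uniform_measure_def vol_ball by simp
qed

lemma moment_eq: "moment AA (sph_triangle AA BB C) = 3 / (4*pi) * integral (ball 0 1) FF"
proof -
  let ?T = "sph_triangle AA BB C"
  let ?U = "uniform_measure lborel (ball (0::real^3) 1)"
  have "moment AA ?T = (\<integral>X. indicator ?T X *\<^sub>R (X \<bullet> AA) \<partial>distr ?U borel sgn)"
    unfolding moment_def sphere_mu_def set_lebesgue_integral_def ..
  also have "\<dots> = (\<integral>x. indicator ?T (sgn x) *\<^sub>R (sgn x \<bullet> AA) \<partial>?U)"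
    by (rule integral_distr) measurable
  also have "\<dots> = (\<integral>x. FF x \<partial>?U)" unfolding FF_def by simp
  also have "\<dots> = (\<integral>x. (indicator (ball 0 1) x / (4/3*pi)) *\<^sub>R FF x \<partial>lborel)"
    unfolding unif_eq
  proof (rule integral_density)
    show "FF \<in> borel_measurable lborel" using FF_meas by simp
    have "(\<lambda>x. indicator (ball (0::real^3) 1) x / (4/3*pi)) \<in> borel_measurable borel"
      by (intro borel_measurable_divide borel_measurable_indicator borel_open) auto
    then show "(\<lambda>x. indicator (ball (0::real^3) 1) x / (4/3*pi)) \<in> borel_measurable lborel" by simp
    show "AE x in lborel. 0 \<le> indicator (ball (0::real^3) 1) x / (4/3*pi)" by (rule AE_I2) simp
  qed
  also have "\<dots> = (\<integral>x. (3/(4*pi)) * (indicator (ball 0 1) x *\<^sub>R FF x) \<partial>lborel)"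
    by (intro Bochner_Integration.integral_cong refl) (simp add: indicator_def)
  also have "\<dots> = 3/(4*pi) * (LINT x:ball 0 1|lborel. FF x)"
    unfolding set_lebesgue_integral_def by (rule integral_mult_right_zero)
  also have "(LINT x:ball 0 1|lborel. FF x) = (LINT x:ball 0 1|lebesgue. FF x)"
    unfolding set_lebesgue_integral_def by (rule integral_completion[symmetric]) measurable
  also have "\<dots> = integral (ball 0 1) FF"
    using FF_ball_int by (intro set_lebesgue_integral_eq_integral(2)) (simp add: absolutely_integrable_on_def)
  finally show ?thesis .
qed

lemma main_local: "4 * pi * moment AA (sph_triangle AA BB C) = 1/2 * arccos ca * sb"
  unfolding moment_eq FF_ball_int[THEN conjunct2] by (simp add: field_simps)

end


theorem theorem2p4:
  fixes A B C :: "real^3"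
  assumes "norm A = 1" and "norm B = 1" and "norm C = 1"
    and "A \<noteq> B" and "B \<noteq> C" and "A \<noteq> C"
    and "independent {A, B, C}"
    and "right_angle_at C A B"
  shows "4 * pi * moment A (sph_triangle A B C)
           = 1/2 * arclen B C * sin (arclen C A)"
proof -
  have AA1: "A \<bullet> A = 1" "B \<bullet> B = 1" "C \<bullet> C = 1" using assms(1-3) by (simp_all add: norm_eq_1)
  define ca where "ca = B \<bullet> C"
  define cb where "cb = A \<bullet> C"
  define wA where "wA = A - cb *\<^sub>R C"
  define wB where "wB = B - ca *\<^sub>R C"
  define sa where "sa = norm wB"
  define sb where "sb = norm wA"
  have "wB \<noteq> 0"
  proof
    assume "wB = 0"
    then have "B = ca *\<^sub>R C" unfolding wB_def by simp
    then have "B \<in> span {A, C}" by (simp add: span_base span_mul)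
    moreover have "{A, B, C} - {B} = {A, C}" using assms(4,5) by auto
    ultimately have "dependent {A, B, C}" unfolding dependent_def by (metis insertCI)
    then show False using assms(7) by simp
  qed
  have "wA \<noteq> 0"
  proof
    assume "wA = 0"
    then have "A = cb *\<^sub>R C" unfolding wA_def by simp
    then have "A \<in> span {B, C}" by (simp add: span_base span_mul)
    moreover have "{A, B, C} - {A} = {B, C}" using assms(4,6) by auto
    ultimately have "dependent {A, B, C}" unfolding dependent_def by (metis insertCI)
    then show False using assms(7) by simp
  qed
  then have sb: "sb > 0" unfolding sb_def by simp
  have sa: "sa > 0" unfolding sa_def using \<open>wB \<noteq> 0\<close> by simp
  have wBC: "wB \<bullet> C = 0" unfolding wB_def ca_def using AA1 by (simp add: inner_diff_left)
  have wAC: "wA \<bullet> C = 0" unfolding wA_def cb_def using AA1 by (simp add: inner_diff_left)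
  have wAB: "wA \<bullet> wB = 0" using assms(8) unfolding right_angle_at_def wA_def wB_def ca_def cb_def .
  have "sa^2 = wB \<bullet> wB" unfolding sa_def by (simp add: power2_norm_eq_inner)
  also have "\<dots> = 1 - ca^2" unfolding wB_def using AA1
    by (simp add: inner_diff_left inner_diff_right ca_def inner_commute power2_eq_square)
  finally have casa: "ca^2 + sa^2 = 1" by simp
  have "sb^2 = wA \<bullet> wA" unfolding sb_def by (simp add: power2_norm_eq_inner)
  also have "\<dots> = 1 - cb^2" unfolding wA_def using AA1
    by (simp add: inner_diff_left inner_diff_right cb_def inner_commute power2_eq_square)
  finally have cbsb: "cb^2 + sb^2 = 1" by simp
  define u2 where "u2 = (1/sa) *\<^sub>R wB"
  define u3 where "u3 = (1/sb) *\<^sub>R wA"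
  interpret s: sph3 ca sa cb sb C u2 u3
  proof unfold_locales
    show "norm u2 = 1" unfolding u2_def using sa by (simp add: sa_def)
    show "norm u3 = 1" unfolding u3_def using sb by (simp add: sb_def)
    show "C \<bullet> u2 = 0" unfolding u2_def using wBC by (simp add: inner_commute)
    show "C \<bullet> u3 = 0" unfolding u3_def using wAC by (simp add: inner_commute)
    show "u2 \<bullet> u3 = 0" unfolding u2_def u3_def using wAB by (simp add: inner_commute)
  qed (use assms(3) sa sb casa cbsb in auto)
  have A: "s.AA = A" using sb unfolding s.AA_def by (simp add: u3_def wA_def)
  have B: "s.BB = B" using sa unfolding s.BB_def by (simp add: u2_def wB_def)
  have cb1: "\<bar>cb\<bar> \<le> 1"
  proof -
    have "cb^2 \<le> 1" using cbsb by (smt (verit) zero_le_power2)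
    then show ?thesis by (simp add: abs_square_le_1)
  qed
  have "sin (arclen C A) = sqrt (1 - cb^2)"
    unfolding arclen_def cb_def using cb1 unfolding cb_def by (simp add: inner_commute sin_arccos_abs)
  also have "\<dots> = sb" using cbsb sb by (simp add: real_sqrt_unique flip: cbsb)
  finally have sinA: "sin (arclen C A) = sb" .
  have arcB: "arclen B C = arccos ca" unfolding arclen_def ca_def ..
  show ?thesis using s.main_local unfolding A B sinA arcB by simp
qed


end
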